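(* In the single-component setting, suppose $\sigma\le\frac{4\sqrt2}{\sqrt\pi}$ and $\gamma^\star_\sigma\le\min\{1,\frac1{4\sqrt\rho}\}$, where $\gamma^\star_\sigma=\sigma^2+\sigma\sqrt{2\log\frac{4\sqrt2}{\sqrt\pi\sigma}}$. Then $\frac{\partial}{\partial\sigma}L(w)\ge p(0)\Big(\frac{\sigma}{11}\int_0^\infty\exp\big((|s(0)|-\frac{\sqrt\rho}4-1)\delta-\frac\rho2\delta^2\big)d\delta-2\sqrt2\exp\big(\frac{s(0)^2}{\nu+\sigma^{-2}}\big)\frac1{\sqrt{\nu+\sigma^{-2}}}\Big)$.
   Context: Single-component setting: $y$ uniform on $\{\pm1\}$; $x=(x_1,x_2)$, $x_1\in\mathbb{R}^{d_1}$, $x_2\sim\mathcal{N}(0,\Sigma_2)$ with $\Sigma_2\succ0$ independent of $x_1$. $\ell_{exp}(t)=\exp(-|t|)$, $L(w)=\mathbb{E}[\ell_{exp}(w^\top x)]$. For fixed $w=(w_1,w_2)$: $\sigma=\sqrt{w_2^\top\Sigma_2w_2}$; $p$ is the density of $\mu=w_1^\top x_1$, assumed such that $\log p$ is differentiable, $\nu$-strongly concave and $\rho$-smooth (i.e. $-\rho\le(\log p)''\le-\nu$) for some $0<\nu\le\rho$; $s(\mu)=\frac{p'(\mu)}{p(\mu)}$. $L(w)=\mathbb{E}_\mu[g_\sigma(\mu)]$ with $g_\sigma(\mu)=\mathbb{E}_{Z\sim\mathcal{N}(0,1)}[\ell_{exp}(\mu+\sigma Z)]$, and $\frac{\partial}{\partial\sigma}L(w)=\mathbb{E}_\mu[\frac{\partial}{\partial\sigma}g_\sigma(\mu)]$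 denotes the derivative with respect to $\sigma$ with the law of $\mu$ held fixed. *)

theory Defs
  imports "HOL-Probability.Probability"
begin

definition ell_exp :: "real \<Rightarrow> real" where
  "ell_exp t = exp (- \<bar>t\<bar>)"

definition g_smooth :: "real \<Rightarrow> real \<Rightarrow> real" where
  "g_smooth \<sigma> \<mu> = (LINT z|lborel. std_normal_density z * ell_exp (\<mu> + \<sigma> * z))"

text \<open>L as a function of sigma with the law of mu (density p) held fixed:
  L = E_mu[g_sigma(mu)].\<close>
definition L_sigma :: "(real \<Rightarrow> real) \<Rightarrow> real \<Rightarrow> real" where
  "L_sigma p \<sigma> = (LINT m|lborel. p m * g_smooth \<sigma> m)"

definition score :: "(real \<Rightarrow> real) \<Rightarrow> real \<Rightarrow> real" where
  "score p x = deriv p x / p x"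

definition gamma_star :: "real \<Rightarrow> real" where
  "gamma_star \<sigma> = \<sigma>\<^sup>2 + \<sigma> * sqrt (2 * ln (4 * sqrt 2 / (sqrt pi * \<sigma>)))"

end

theory Submission imports Defs begin


definition dl :: "real \<Rightarrow> real" where
  "dl t = (if t \<ge> 0 then - exp (- t) else exp t)"

lemma ell_lip: "\<bar>ell_exp a - ell_exp b\<bar> \<le> \<bar>a - b\<bar>"
proof -
  have key: "ell_exp x - ell_exp y \<le> \<bar>x - y\<bar>" for x y
  proof (cases "\<bar>x\<bar> \<le> \<bar>y\<bar>")
    case True
    have h: "1 - exp (-(\<bar>y\<bar> - \<bar>x\<bar>)) \<le> \<bar>y\<bar> - \<bar>x\<bar>"
      using exp_ge_add_one_self[of "-(\<bar>y\<bar> - \<bar>x\<bar>)"] by linarith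
    have "exp (- \<bar>x\<bar>) - exp (- \<bar>y\<bar>) = exp (- \<bar>x\<bar>) * (1 - exp (-(\<bar>y\<bar> - \<bar>x\<bar>)))"
      by (simp add: algebra_simps flip: exp_add)
    also have "\<dots> \<le> 1 * (\<bar>y\<bar> - \<bar>x\<bar>)"
      using h True by (intro mult_mono) auto
    also have "\<dots> \<le> \<bar>x - y\<bar>" by simp
    finally show ?thesis by (simp add: ell_exp_def)
  next
    case False
    then have "exp (- \<bar>x\<bar>) \<le> exp (- \<bar>y\<bar>)" by simp
    then show ?thesis using abs_ge_zero[of "x - y"] unfolding ell_exp_def by linarith
  qed
  show ?thesis using key[of a b] key[of b a] by (simp add: abs_le_iff abs_minus_commute)
qed

lemma ell_nonneg: "0 \<le> ell_exp t" by (simp add: ell_exp_def)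
lemma ell_le1: "ell_exp t \<le> 1" by (simp add: ell_exp_def)
lemma dl_bound: "\<bar>dl t\<bar> \<le> 1" by (simp add: dl_def)

lemma ell_meas[measurable]: "ell_exp \<in> borel_measurable borel"
  unfolding ell_exp_def[abs_def] by measurable
lemma dl_meas[measurable]: "dl \<in> borel_measurable borel"
  unfolding dl_def[abs_def] by measurable

lemma ell_deriv:
  assumes "t \<noteq> 0"
  shows "(ell_exp has_real_derivative dl t) (at t)"
proof (cases "t > 0")
  case True
  have "((\<lambda>x. exp (- x)) has_real_derivative - exp (- t)) (at t)"
    by (auto intro!: derivative_eq_intros)
  then have "(ell_exp has_real_derivative - exp (- t)) (at t)"
    by (rule has_field_derivative_transform_within_open[where S="{0<..}"])
       (use True in \<open>auto simp: ell_exp_def\<close>)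
  then show ?thesis using True by (simp add: dl_def)
next
  case False
  with assms have t: "t < 0" by simp
  have "((\<lambda>x. exp x) has_real_derivative exp t) (at t)"
    by (auto intro!: derivative_eq_intros)
  then have "(ell_exp has_real_derivative exp t) (at t)"
    by (rule has_field_derivative_transform_within_open[where S="{..<0}"])
       (use t in \<open>auto simp: ell_exp_def\<close>)
  then show ?thesis using t by (simp add: dl_def)
qed

abbreviation "phi \<equiv> std_normal_density"

lemma g_int: "integrable lborel (\<lambda>z. phi z * ell_exp (m + s * z))"
  by (rule Bochner_Integration.integrable_bound[where f=phi])
     (auto simp: abs_mult ell_nonneg ell_le1 intro!: mult_left_le)

lemma phi_abs_int: "integrable lborel (\<lambda>z. phi z * \<bar>z\<bar>)"
  using integrable_std_normal_moment_abs[of 1] by simp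

definition C0 :: real where "C0 = (LINT z|lborel. phi z * \<bar>z\<bar>)"

lemma absdiff_phi: "\<bar>phi z * a - phi z * b\<bar> = phi z * \<bar>a - b\<bar>"
proof -
  have "phi z * a - phi z * b = phi z * (a - b)" by (rule right_diff_distrib[symmetric])
  then show ?thesis by (simp only: abs_mult abs_of_nonneg[OF normal_density_nonneg])
qed

lemma g_lip_s: "\<bar>g_smooth s' m - g_smooth s m\<bar> \<le> \<bar>s' - s\<bar> * C0"
proof -
  have eq: "g_smooth s' m - g_smooth s m = (LINT z|lborel. phi z * ell_exp (m + s' * z) - phi z * ell_exp (m + s * z))"
    by (simp only: g_smooth_def Bochner_Integration.integral_diff[OF g_int g_int, symmetric])
  have bd: "\<bar>(LINT z|lborel. phi z * ell_exp (m + s' * z) - phi z * ell_exp (m + s * z))\<bar> \<le> (LINT z|lborel. \<bar>s' - s\<bar> * (phi z * \<bar>z\<bar>))"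
  proof (rule integral_abs_bound_integral)
    show "integrable lborel (\<lambda>z. phi z * ell_exp (m + s' * z) - phi z * ell_exp (m + s * z))"
      by (intro Bochner_Integration.integrable_diff g_int)
    show "integrable lborel (\<lambda>z. \<bar>s' - s\<bar> * (phi z * \<bar>z\<bar>))"
      by (intro integrable_mult_right phi_abs_int)
    fix z :: real
    have d: "(m + s' * z) - (m + s * z) = (s' - s) * z" by (simp add: algebra_simps)
    have "\<bar>phi z * ell_exp (m + s' * z) - phi z * ell_exp (m + s * z)\<bar>
        = phi z * \<bar>ell_exp (m + s' * z) - ell_exp (m + s * z)\<bar>"
      by (rule absdiff_phi)
    also have "\<dots> \<le> phi z * \<bar>(m + s' * z) - (m + s * z)\<bar>"
      by (intro mult_left_mono ell_lip) auto
    also have "\<dots> = \<bar>s' - s\<bar> * (phi z * \<bar>z\<bar>)"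
      unfolding d abs_mult by (rule mult.left_commute)
    finally show "\<bar>phi z * ell_exp (m + s' * z) - phi z * ell_exp (m + s * z)\<bar> \<le> \<bar>s' - s\<bar> * (phi z * \<bar>z\<bar>)" .
  qed
  have "(LINT z|lborel. \<bar>s' - s\<bar> * (phi z * \<bar>z\<bar>)) = \<bar>s' - s\<bar> * C0" unfolding C0_def by (rule integral_mult_right_zero)
  note hB = this
  show ?thesis unfolding eq using bd unfolding hB .
qed

lemma g_lip_m: "\<bar>g_smooth s m - g_smooth s m'\<bar> \<le> \<bar>m - m'\<bar>"
proof -
  have eq: "g_smooth s m - g_smooth s m' = (LINT z|lborel. phi z * ell_exp (m + s * z) - phi z * ell_exp (m' + s * z))"
    by (simp only: g_smooth_def Bochner_Integration.integral_diff[OF g_int g_int, symmetric])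
  have bd: "\<bar>(LINT z|lborel. phi z * ell_exp (m + s * z) - phi z * ell_exp (m' + s * z))\<bar> \<le> (LINT z|lborel. \<bar>m - m'\<bar> * phi z)"
  proof (rule integral_abs_bound_integral)
    show "integrable lborel (\<lambda>z. phi z * ell_exp (m + s * z) - phi z * ell_exp (m' + s * z))"
      by (intro Bochner_Integration.integrable_diff g_int)
    show "integrable lborel (\<lambda>z. \<bar>m - m'\<bar> * phi z)"
      by simp
    fix z :: real
    have d: "(m + s * z) - (m' + s * z) = m - m'" by simp
    have "\<bar>phi z * ell_exp (m + s * z) - phi z * ell_exp (m' + s * z)\<bar>
        = phi z * \<bar>ell_exp (m + s * z) - ell_exp (m' + s * z)\<bar>"
      by (rule absdiff_phi)
    also have "\<dots> \<le> phi z * \<bar>(m + s * z) - (m' + s * z)\<bar>"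
      by (intro mult_left_mono ell_lip) auto
    also have "\<dots> = \<bar>m - m'\<bar> * phi z" unfolding d by (rule mult.commute)
    finally show "\<bar>phi z * ell_exp (m + s * z) - phi z * ell_exp (m' + s * z)\<bar> \<le> \<bar>m - m'\<bar> * phi z" .
  qed
  have "(LINT z|lborel. \<bar>m - m'\<bar> * phi z) = \<bar>m - m'\<bar>" by (simp add: integral_mult_right_zero)
  note hB = this
  show ?thesis unfolding eq using bd unfolding hB .
qed

lemma g_bounds: "0 \<le> g_smooth s m" "g_smooth s m \<le> 1"
proof -
  show "0 \<le> g_smooth s m" unfolding g_smooth_def
    by (rule integral_nonneg_AE) (auto simp: ell_nonneg)
  have "g_smooth s m \<le> (LINT z|lborel. phi z)" unfolding g_smooth_def
    by (rule integral_mono) (auto simp: g_int intro!: mult_left_le ell_le1)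
  then show "g_smooth s m \<le> 1" by simp
qed

lemma g_cont: "continuous_on UNIV (g_smooth s)"
proof -
  have "\<forall>x\<in>UNIV. \<forall>y\<in>UNIV. dist (g_smooth s x) (g_smooth s y) \<le> 1 * dist x y"
    using g_lip_m by (simp add: dist_real_def)
  then have "lipschitz_on 1 UNIV (g_smooth s)"
    by (simp add: lipschitz_on_def)
  then show ?thesis by (rule lipschitz_on_continuous_on)
qed

lemma g_meas[measurable]: "g_smooth s \<in> borel_measurable borel"
  by (rule borel_measurable_continuous_onI[OF g_cont])

lemma DERIV_integral:
  fixes f :: "real \<Rightarrow> 'a \<Rightarrow> real" and M :: "'a measure"
  assumes meas: "\<And>s. f s \<in> borel_measurable M" and f'm: "f' \<in> borel_measurable M"
    and intf: "integrable M (f x)" and w: "integrable M w"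
    and lim: "AE y in M. ((\<lambda>s. f s y) has_real_derivative f' y) (at x)"
    and bd: "\<And>s y. y \<in> space M \<Longrightarrow> \<bar>f s y - f x y\<bar> \<le> \<bar>s - x\<bar> * w y"
  shows "((\<lambda>s. LINT y|M. f s y) has_real_derivative (LINT y|M. f' y)) (at x)"
proof -
  have intd: "integrable M (\<lambda>y. f s y - f x y)" for s
  proof (rule Bochner_Integration.integrable_bound[where f="\<lambda>y. \<bar>s - x\<bar> * w y"])
    show "integrable M (\<lambda>y. \<bar>s - x\<bar> * w y)" using w by simp
    show "(\<lambda>y. f s y - f x y) \<in> borel_measurable M" using meas by measurable
    show "AE y in M. norm (f s y - f x y) \<le> norm (\<bar>s - x\<bar> * w y)"
    proof (rule AE_I2)
      fix y assume y: "y \<in> space M"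
      have "\<bar>s - x\<bar> * w y \<le> \<bar>s - x\<bar> * \<bar>w y\<bar>" by (intro mult_left_mono) auto
      then show "norm (f s y - f x y) \<le> norm (\<bar>s - x\<bar> * w y)"
        using bd[OF y, of s] by (simp add: abs_mult)
    qed
  qed
  have ints: "integrable M (f s)" for s
  proof -
    have "integrable M (\<lambda>y. (f s y - f x y) + f x y)"
      using intd intf by (rule Bochner_Integration.integrable_add)
    then show ?thesis by simp
  qed
  show ?thesis
    unfolding DERIV_def tendsto_at_iff_sequentially
  proof (intro allI impI)
    fix X :: "nat \<Rightarrow> real"
    assume X0: "\<forall>i. X i \<in> UNIV - {0}" and X: "X \<longlonglongrightarrow> 0"
    have Xat: "filterlim X (at 0) sequentially"
      using X0 X by (auto simp: filterlim_at)
    have eq: "((\<lambda>h. ((LINT y|M. f (x + h) y) - (LINT y|M. f x y)) / h) \<circ> X) =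
        (\<lambda>i. LINT y|M. (f (x + X i) y - f x y) / X i)"
      by (rule ext) (simp add: ints)
    show "((\<lambda>h. ((LINT y|M. f (x + h) y) - (LINT y|M. f x y)) / h) \<circ> X) \<longlonglongrightarrow> (LINT y|M. f' y)"
      unfolding eq
    proof (rule integral_dominated_convergence[where w=w])
      show "f' \<in> borel_measurable M" by fact
      show "(\<lambda>y. (f (x + X i) y - f x y) / X i) \<in> borel_measurable M" for i
        using meas by measurable
      show "integrable M w" by fact
      show "AE y in M. (\<lambda>i. (f (x + X i) y - f x y) / X i) \<longlonglongrightarrow> f' y"
        using lim
      proof eventually_elim
        case (elim y)
        then have "((\<lambda>h. (f (x + h) y - f x y) / h) \<longlongrightarrow> f' y) (at 0)"
          by (simp add: DERIV_def)
        from filterlim_compose[OF this Xat] show ?case by (simp add: o_def)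
      qed
      show "AE y in M. norm ((f (x + X i) y - f x y) / X i) \<le> w y" for i
      proof (rule AE_I2)
        fix y assume y: "y \<in> space M"
        have Xi: "X i \<noteq> 0" using X0 by auto
        have "\<bar>f (x + X i) y - f x y\<bar> \<le> \<bar>X i\<bar> * w y" using bd[OF y, of "x + X i"] by simp
        then show "norm ((f (x + X i) y - f x y) / X i) \<le> w y"
          using Xi by (simp add: abs_divide divide_le_eq mult.commute)
      qed
    qed
  qed
qed




lemma g_deriv:
  assumes s: "s > 0"
  shows "((\<lambda>t. g_smooth t m) has_real_derivative (LINT z|lborel. phi z * (z * dl (m + s*z)))) (at s)"
proof -
  have "((\<lambda>t. LINT z|lborel. phi z * ell_exp (m + t * z)) has_real_derivative (LINT z|lborel. phi z * (z * dl (m + s*z)))) (at s)"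
  proof (rule DERIV_integral[where w="\<lambda>z. phi z * \<bar>z\<bar>"])
    show "\<And>t. (\<lambda>z. phi z * ell_exp (m + t * z)) \<in> borel_measurable lborel" by measurable
    show "(\<lambda>z. phi z * (z * dl (m + s * z))) \<in> borel_measurable lborel" by measurable
    show "integrable lborel (\<lambda>z. phi z * ell_exp (m + s * z))" by (rule g_int)
    show "integrable lborel (\<lambda>z. phi z * \<bar>z\<bar>)" by (rule phi_abs_int)
    show "AE z in lborel. ((\<lambda>t. phi z * ell_exp (m + t * z)) has_real_derivative phi z * (z * dl (m + s * z))) (at s)"
      using AE_lborel_singleton[of "- m / s"]
    proof eventually_elim
      case (elim z)
      then have nz: "m + s * z \<noteq> 0" using s by (auto simp: field_simps)
      have "((\<lambda>t. ell_exp (m + t * z)) has_real_derivative dl (m + s * z) * z) (at s)"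
        by (rule DERIV_chain2[where f=ell_exp and g="\<lambda>t. m + t * z", OF ell_deriv[OF nz]])
           (auto intro!: derivative_eq_intros)
      from DERIV_cmult[OF this, of "phi z"] show ?case by (simp add: ac_simps)
    qed
    fix t z :: real
    have "\<bar>phi z * ell_exp (m + t * z) - phi z * ell_exp (m + s * z)\<bar>
        = phi z * \<bar>ell_exp (m + t * z) - ell_exp (m + s * z)\<bar>"
      by (simp add: abs_mult flip: right_diff_distrib)
    also have "\<dots> \<le> phi z * \<bar>(m + t * z) - (m + s * z)\<bar>"
      by (intro mult_left_mono ell_lip) auto
    also have "\<bar>(m + t * z) - (m + s * z)\<bar> = \<bar>t - s\<bar> * \<bar>z\<bar>"
      by (simp add: abs_mult flip: left_diff_distrib)
    finally show "\<bar>phi z * ell_exp (m + t * z) - phi z * ell_exp (m + s * z)\<bar> \<le> \<bar>t - s\<bar> * (phi z * \<bar>z\<bar>)"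
      by (simp add: ac_simps)
  qed
  then show ?thesis unfolding g_smooth_def by simp
qed

lemma int_zdl: "integrable lborel (\<lambda>z. phi z * (z * dl (m + s*z)))"
proof (rule Bochner_Integration.integrable_bound[where f="\<lambda>z. phi z * \<bar>z\<bar>"])
  show "integrable lborel (\<lambda>z. phi z * \<bar>z\<bar>)" by (rule phi_abs_int)
  show "(\<lambda>z. phi z * (z * dl (m + s*z))) \<in> borel_measurable lborel" by measurable
  show "AE z in lborel. norm (phi z * (z * dl (m + s*z))) \<le> norm (phi z * \<bar>z\<bar>)"
  proof (rule AE_I2)
    fix z :: real
    have "\<bar>z\<bar> * \<bar>dl (m + s*z)\<bar> \<le> \<bar>z\<bar>" by (rule mult_left_le[OF dl_bound]) simp
    then show "norm (phi z * (z * dl (m + s*z))) \<le> norm (phi z * \<bar>z\<bar>)"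
      by (simp add: abs_mult mult_left_mono)
  qed
qed

lemma phi_even: "phi (- x) = phi x"
  by (simp add: normal_density_def)

lemma stein:
  assumes s: "s > 0"
  shows "(LINT z|lborel. phi z * (z * dl (m + s*z))) = s * g_smooth s m - 2 * phi (m / s)"
proof -
  define z0 where "z0 = - m / s"
  have z0: "m + s * z0 = 0" using s by (simp add: z0_def)
  define h where "h z = phi z * (z * dl (m + s*z)) - s * (phi z * ell_exp (m + s*z))" for z
  have inth: "integrable lborel h" unfolding h_def[abs_def] using int_zdl g_int by simp
  define c where "c = 1 / sqrt (2 * pi)"
  have phic: "phi z = c * exp (- z\<^sup>2 / 2)" for z by (simp add: normal_density_def c_def)
  define F2 where "F2 z = - c * (exp (- z\<^sup>2 / 2) * exp (m + s * z))" for z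
  define f2 where "f2 z = phi z * (z * exp (m + s * z)) - s * (phi z * exp (m + s * z))" for z
  define F1 where "F1 z = c * (exp (- z\<^sup>2 / 2) * exp (- (m + s * z)))" for z
  define f1 where "f1 z = phi z * (z * - exp (- (m + s * z))) - s * (phi z * exp (- (m + s * z)))" for z
  have F2d: "(F2 has_vector_derivative f2 x) (at x)" for x
    unfolding has_real_derivative_iff_has_vector_derivative[symmetric] F2_def[abs_def] f2_def phic
    by (auto intro!: derivative_eq_intros simp: field_simps)
  have F1d: "(F1 has_vector_derivative f1 x) (at x)" for x
    unfolding has_real_derivative_iff_has_vector_derivative[symmetric] F1_def[abs_def] f1_def phic
    by (auto intro!: derivative_eq_intros simp: field_simps)
  have f2c: "isCont f2 x" for x unfolding f2_def phic by (intro continuous_intros) auto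
  have f1c: "isCont f1 x" for x unfolding f1_def phic by (intro continuous_intros) auto
  have F2c: "isCont F2 x" for x unfolding F2_def by (intro continuous_intros) auto
  have F1c: "isCont F1 x" for x unfolding F1_def by (intro continuous_intros) auto
  have left: "x \<in> einterval (-\<infinity>) (ereal z0) \<Longrightarrow> h x = f2 x" for x
  proof -
    assume "x \<in> einterval (-\<infinity>) (ereal z0)"
    then have "x < z0" by (simp add: einterval_iff)
    then have "s * x < s * z0" using s by simp
    then have "m + s * x < 0" using z0 by linarith
    then show "h x = f2 x" by (simp add: h_def f2_def dl_def ell_exp_def)
  qed
  have right: "x \<in> einterval (ereal z0) \<infinity> \<Longrightarrow> h x = f1 x" for x
  proof -
    assume "x \<in> einterval (ereal z0) \<infinity>"
    then have "z0 < x" by (simp add: einterval_iff)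
    then have "s * z0 < s * x" using s by simp
    then have "m + s * x > 0" using z0 by linarith
    then show "h x = f1 x" by (simp add: h_def f1_def dl_def ell_exp_def)
  qed
  have sint: "set_integrable lborel (einterval a b) h" for a b
    unfolding set_integrable_def by (rule integrable_mult_indicator) (auto simp: inth)
  have I2: "(LBINT z=-\<infinity>..ereal z0. h z) = F2 z0 - 0"
  proof -
    have "(LBINT z=-\<infinity>..ereal z0. h z) = (LBINT z=-\<infinity>..ereal z0. f2 z)"
      by (rule interval_integral_cong) (simp add: left)
    also have "\<dots> = F2 z0 - 0"
    proof (rule interval_integral_FTC_integrable[where F=F2])
      show "set_integrable lborel (einterval (- \<infinity>) (ereal z0)) f2"
        using sint[of "-\<infinity>" "ereal z0"] unfolding set_integrable_def
        by (rule Bochner_Integration.integrable_cong[THEN iffD1, rotated 2])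
           (auto simp: left split: split_indicator)
      show "((F2 \<circ> real_of_ereal) \<longlongrightarrow> 0) (at_right (- \<infinity>))"
        unfolding ereal_tendsto_simps
      proof -
        have "((\<lambda>z. exp (- z\<^sup>2 / 2) * exp (m + s * z)) \<longlongrightarrow> 0) at_bot"
        proof (rule tendsto_sandwich[where f="\<lambda>_. 0" and h="\<lambda>z. exp m * exp z"])
          show "\<forall>\<^sub>F z in at_bot. 0 \<le> exp (- z\<^sup>2 / 2) * exp (m + s * z)" by simp
          show "\<forall>\<^sub>F z in at_bot. exp (- z\<^sup>2 / 2) * exp (m + s * z) \<le> exp m * exp z"
            unfolding eventually_at_bot_linorder
          proof (intro exI[of _ "-2"] allI impI)
            fix z :: real assume z: "z \<le> -2"
            have "(-2) * z \<le> z * z" using z by (intro mult_right_mono_neg) auto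
            moreover have "s * z \<le> 0" using s z by (intro mult_nonneg_nonpos) auto
            ultimately have "- z\<^sup>2 / 2 + (m + s * z) \<le> m + z" by (simp add: power2_eq_square)
            moreover have "exp (- z\<^sup>2 / 2) * exp (m + s * z) = exp (- z\<^sup>2 / 2 + (m + s * z))"
              by (rule exp_add[symmetric])
            moreover have "exp m * exp z = exp (m + z)" by (rule exp_add[symmetric])
            ultimately show "exp (- z\<^sup>2 / 2) * exp (m + s * z) \<le> exp m * exp z" by simp
          qed
          show "((\<lambda>_. 0) \<longlongrightarrow> (0::real)) at_bot" by simp
          show "((\<lambda>z. exp m * exp z) \<longlongrightarrow> 0) at_bot"
            using tendsto_mult[OF tendsto_const[of "exp m"] exp_at_bot] by simp
        qed
        from tendsto_mult[OF tendsto_const[of "- c"] this]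
        show "(F2 \<longlongrightarrow> 0) at_bot" by (simp add: F2_def[abs_def])
      qed
      have "(F2 \<longlongrightarrow> F2 z0) (at z0)" using F2c[of z0] by (simp add: isCont_def)
      then have "(F2 \<longlongrightarrow> F2 z0) (at_left z0)" by (rule tendsto_within_subset) auto
      then show "((F2 \<circ> real_of_ereal) \<longlongrightarrow> F2 z0) (at_left (ereal z0))"
        unfolding ereal_tendsto_simps .
    qed (auto simp: F2d f2c)
    finally show ?thesis .
  qed
  have I1: "(LBINT z=ereal z0..\<infinity>. h z) = 0 - F1 z0"
  proof -
    have "(LBINT z=ereal z0..\<infinity>. h z) = (LBINT z=ereal z0..\<infinity>. f1 z)"
      by (rule interval_integral_cong) (simp add: right)
    also have "\<dots> = 0 - F1 z0"
    proof (rule interval_integral_FTC_integrable[where F=F1])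
      show "set_integrable lborel (einterval (ereal z0) \<infinity>) f1"
        using sint[of "ereal z0" "\<infinity>"] unfolding set_integrable_def
        by (rule Bochner_Integration.integrable_cong[THEN iffD1, rotated 2])
           (auto simp: right split: split_indicator)
      show "((F1 \<circ> real_of_ereal) \<longlongrightarrow> 0) (at_left \<infinity>)"
        unfolding ereal_tendsto_simps
      proof -
        have "((\<lambda>z. exp (- z\<^sup>2 / 2) * exp (- (m + s * z))) \<longlongrightarrow> 0) at_top"
        proof (rule tendsto_sandwich[where f="\<lambda>_. 0" and h="\<lambda>z. exp (- m) * exp (- z)"])
          show "\<forall>\<^sub>F z in at_top. 0 \<le> exp (- z\<^sup>2 / 2) * exp (- (m + s * z))" by simp
          show "\<forall>\<^sub>F z in at_top. exp (- z\<^sup>2 / 2) * exp (- (m + s * z)) \<le> exp (- m) * exp (- z)"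
            unfolding eventually_at_top_linorder
          proof (intro exI[of _ "2"] allI impI)
            fix z :: real assume z: "z \<ge> 2"
            have "2 * z \<le> z * z" using z by (intro mult_right_mono) auto
            moreover have "s * z \<ge> 0" using s z by simp
            ultimately have "- z\<^sup>2 / 2 + - (m + s * z) \<le> - m + - z" by (simp add: power2_eq_square)
            moreover have "exp (- z\<^sup>2 / 2) * exp (- (m + s * z)) = exp (- z\<^sup>2 / 2 + - (m + s * z))"
              by (rule exp_add[symmetric])
            moreover have "exp (- m) * exp (- z) = exp (- m + - z)" by (rule exp_add[symmetric])
            ultimately show "exp (- z\<^sup>2 / 2) * exp (- (m + s * z)) \<le> exp (- m) * exp (- z)" by simp
          qed
          show "((\<lambda>_. 0) \<longlongrightarrow> (0::real)) at_top" by simp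
          have "((\<lambda>z. exp (- z)) \<longlongrightarrow> (0::real)) at_top"
            by (rule filterlim_compose[OF exp_at_bot filterlim_uminus_at_bot_at_top])
          then show "((\<lambda>z. exp (- m) * exp (- z)) \<longlongrightarrow> 0) at_top"
            using tendsto_mult[OF tendsto_const[of "exp (- m)"]] by fastforce
        qed
        from tendsto_mult[OF tendsto_const[of "c"] this]
        show "(F1 \<longlongrightarrow> 0) at_top" by (simp add: F1_def[abs_def])
      qed
      have "(F1 \<longlongrightarrow> F1 z0) (at z0)" using F1c[of z0] by (simp add: isCont_def)
      then have "(F1 \<longlongrightarrow> F1 z0) (at_right z0)" by (rule tendsto_within_subset) auto
      then show "((F1 \<circ> real_of_ereal) \<longlongrightarrow> F1 z0) (at_right (ereal z0))"
        unfolding ereal_tendsto_simps .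
    qed (auto simp: F1d f1c)
    finally show ?thesis .
  qed
  have "(LINT z|lborel. h z) = (LBINT z=-\<infinity>..\<infinity>. h z)"
    by (simp add: interval_lebesgue_integral_def set_lebesgue_integral_def einterval_def)
  also have "\<dots> = (LBINT z=-\<infinity>..ereal z0. h z) + (LBINT z=ereal z0..\<infinity>. h z)"
    by (rule interval_integral_sum[symmetric])
       (use sint[of "-\<infinity>" "\<infinity>"] in \<open>simp add: interval_lebesgue_integrable_def\<close>)
  also have "\<dots> = - 2 * phi z0"
    unfolding I1 I2 using z0 by (simp add: F1_def F2_def phic)
  finally have hval: "(LINT z|lborel. h z) = - 2 * phi z0" .
  have "(LINT z|lborel. h z) = (LINT z|lborel. phi z * (z * dl (m + s*z))) - s * g_smooth s m"
    unfolding h_def g_smooth_def using int_zdl g_int by simp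
  moreover have "phi z0 = phi (m / s)" unfolding z0_def
    by (metis minus_divide_left phi_even)
  ultimately show ?thesis using hval by simp
qed




lemma phi_le1: "phi x \<le> 1"
proof -
  have "sqrt (2 * pi) \<ge> 1" using pi_gt3 by (simp add: real_sqrt_ge_1_iff)
  then have "1 / sqrt (2 * pi) \<le> 1" by simp
  moreover have "exp (- x\<^sup>2 / 2) \<le> 1" by simp
  ultimately have "1 / sqrt (2 * pi) * exp (- x\<^sup>2 / 2) \<le> 1 * 1"
    by (intro mult_mono) auto
  then show ?thesis by (simp add: normal_density_def)
qed

lemma p_deriv:
  assumes p_pos: "\<And>x. p x > 0" and logp_diff: "\<And>x. (\<lambda>t. ln (p t)) differentiable (at x)"
  shows "((\<lambda>t. ln (p t)) has_real_derivative score p x) (at x)"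
    and "(p has_real_derivative p x * score p x) (at x)"
proof -
  define D where "D = deriv (\<lambda>t. ln (p t)) x"
  have d1: "((\<lambda>t. ln (p t)) has_real_derivative D) (at x)"
    unfolding D_def using logp_diff DERIV_deriv_iff_real_differentiable by blast
  have "((\<lambda>t. exp (ln (p t))) has_real_derivative exp (ln (p x)) * D) (at x)"
    by (rule DERIV_chain2[where f=exp, OF DERIV_exp d1])
  moreover have "(\<lambda>t. exp (ln (p t))) = p" using p_pos by (simp add: fun_eq_iff)
  ultimately have d2: "(p has_real_derivative p x * D) (at x)" using p_pos by simp
  then have "deriv p x = p x * D" by (rule DERIV_imp_deriv)
  then have sD: "score p x = D" using p_pos[of x] by (simp add: score_def)
  show "((\<lambda>t. ln (p t)) has_real_derivative score p x) (at x)" using d1 sD by simp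
  show "(p has_real_derivative p x * score p x) (at x)" using d2 sD by simp
qed

lemma sign_bound:
  fixes u u' :: "real \<Rightarrow> real"
  assumes u0: "u 0 = 0" and du: "\<And>t. (u has_real_derivative u' t) (at t)"
    and pos: "\<And>t. t > 0 \<Longrightarrow> u' t \<le> 0" and neg: "\<And>t. t < 0 \<Longrightarrow> u' t \<ge> 0"
  shows "u x \<le> 0"
proof (cases x "0::real" rule: linorder_cases)
  case less
  obtain z where z: "x < z" "z < 0" "u 0 - u x = (0 - x) * u' z"
    using MVT2[OF less, of u u'] du by blast
  have "x * u' z \<le> 0" using mult_nonpos_nonneg[of x "u' z"] z less neg[of z] by simp
  then show ?thesis using z u0 by simp
next
  case equal then show ?thesis using u0 by simp
next
  case greater
  obtain z where z: "0 < z" "z < x" "u x - u 0 = (x - 0) * u' z"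
    using MVT2[OF greater, of u u'] du by blast
  have "(x - 0) * u' z \<le> 0" using z greater pos[of z] by (simp add: mult_nonneg_nonpos)
  then show ?thesis using z u0 by simp
qed

lemma p_bounds:
  fixes p :: "real \<Rightarrow> real" and \<nu> \<rho> :: real
  assumes p_pos: "\<And>x. p x > 0"
    and logp_diff: "\<And>x. (\<lambda>t. ln (p t)) differentiable (at x)"
    and logconc: "\<And>x y. x < y \<Longrightarrow>
        - \<rho> * (y - x) \<le> score p y - score p x \<and> score p y - score p x \<le> - \<nu> * (y - x)"
  shows "p m \<le> p 0 * exp (score p 0 * m - \<nu> / 2 * m\<^sup>2)"
    and "p 0 * exp (score p 0 * m - \<rho> / 2 * m\<^sup>2) \<le> p m"
proof -
  note dl = p_deriv(1)[OF p_pos logp_diff]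
  define S0 where "S0 = score p 0"
  have "(\<lambda>t. ln (p t) + (- ln (p 0) - S0 * t + \<nu> / 2 * t\<^sup>2)) m \<le> 0"
  proof (rule sign_bound[where u="\<lambda>t. ln (p t) + (- ln (p 0) - S0 * t + \<nu> / 2 * t\<^sup>2)" and u'="\<lambda>t. score p t + (- S0 + \<nu> * t)"])
    fix t :: real
    have dp: "((\<lambda>t. - ln (p 0) - S0 * t + \<nu> / 2 * t\<^sup>2) has_real_derivative (- S0 + \<nu> * t)) (at t)"
      by (auto intro!: derivative_eq_intros)
    show "((\<lambda>t. ln (p t) + (- ln (p 0) - S0 * t + \<nu> / 2 * t\<^sup>2)) has_real_derivative score p t + (- S0 + \<nu> * t)) (at t)"
      by (rule DERIV_add[OF dl dp])
  next
    show "score p t + (- S0 + \<nu> * t) \<le> 0" if "t > 0" for t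
      using logconc[OF that] by (simp add: S0_def)
    show "score p t + (- S0 + \<nu> * t) \<ge> 0" if "t < 0" for t
      using logconc[OF that] by (simp add: S0_def algebra_simps)
  qed simp
  then have "ln (p m) \<le> ln (p 0) + (S0 * m - \<nu> / 2 * m\<^sup>2)" by simp
  then have "exp (ln (p m)) \<le> exp (ln (p 0) + (S0 * m - \<nu> / 2 * m\<^sup>2))" by simp
  then show "p m \<le> p 0 * exp (score p 0 * m - \<nu> / 2 * m\<^sup>2)"
    using p_pos by (simp add: exp_add S0_def)
  have "(\<lambda>t. - ln (p t) + (ln (p 0) + S0 * t - \<rho> / 2 * t\<^sup>2)) m \<le> 0"
  proof (rule sign_bound[where u="\<lambda>t. - ln (p t) + (ln (p 0) + S0 * t - \<rho> / 2 * t\<^sup>2)" and u'="\<lambda>t. - score p t + (S0 - \<rho> * t)"])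
    fix t :: real
    have dp: "((\<lambda>t. ln (p 0) + S0 * t - \<rho> / 2 * t\<^sup>2) has_real_derivative (S0 - \<rho> * t)) (at t)"
      by (auto intro!: derivative_eq_intros)
    show "((\<lambda>t. - ln (p t) + (ln (p 0) + S0 * t - \<rho> / 2 * t\<^sup>2)) has_real_derivative - score p t + (S0 - \<rho> * t)) (at t)"
      by (rule DERIV_add[OF DERIV_minus[OF dl] dp])
  next
    show "- score p t + (S0 - \<rho> * t) \<le> 0" if "t > 0" for t
      using logconc[OF that] by (simp add: S0_def)
    show "- score p t + (S0 - \<rho> * t) \<ge> 0" if "t < 0" for t
      using logconc[OF that] by (simp add: S0_def algebra_simps)
  qed simp
  then have "ln (p 0) + (S0 * m - \<rho> / 2 * m\<^sup>2) \<le> ln (p m)" by simp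
  then have "exp (ln (p 0) + (S0 * m - \<rho> / 2 * m\<^sup>2)) \<le> exp (ln (p m))" by simp
  then show "p 0 * exp (score p 0 * m - \<rho> / 2 * m\<^sup>2) \<le> p m"
    using p_pos by (simp add: exp_add S0_def)
qed

lemma L_deriv:
  assumes p_pos: "\<And>x. p x > 0" and p_int: "integrable lborel p"
    and p_meas: "p \<in> borel_measurable borel" and s: "\<sigma> > 0"
  shows "(L_sigma p has_real_derivative
           (\<sigma> * L_sigma p \<sigma> - 2 * (LINT m|lborel. p m * phi (m / \<sigma>)))) (at \<sigma>)"
proof -
  have intpg: "integrable lborel (\<lambda>m. p m * g_smooth t m)" for t
    by (rule Bochner_Integration.integrable_bound[where f=p])
       (use p_int p_meas p_pos in \<open>auto simp: abs_mult g_bounds intro!: mult_left_le\<close>)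
  have intpp: "integrable lborel (\<lambda>m. p m * phi (m / \<sigma>))"
    by (rule Bochner_Integration.integrable_bound[where f=p])
       (use p_int p_meas p_pos in \<open>auto simp: abs_mult phi_le1 intro!: mult_left_le\<close>)
  have "((\<lambda>t. LINT m|lborel. p m * g_smooth t m) has_real_derivative
      (LINT m|lborel. p m * (\<sigma> * g_smooth \<sigma> m - 2 * phi (m / \<sigma>)))) (at \<sigma>)"
  proof (rule DERIV_integral[where w="\<lambda>m. p m * C0"])
    show "\<And>t. (\<lambda>m. p m * g_smooth t m) \<in> borel_measurable lborel" using p_meas by measurable
    show "(\<lambda>m. p m * (\<sigma> * g_smooth \<sigma> m - 2 * phi (m / \<sigma>))) \<in> borel_measurable lborel"
      using p_meas by measurable
    show "integrable lborel (\<lambda>m. p m * g_smooth \<sigma> m)" by (rule intpg)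
    show "integrable lborel (\<lambda>m. p m * C0)" using p_int by simp
    show "AE m in lborel. ((\<lambda>t. p m * g_smooth t m) has_real_derivative
        p m * (\<sigma> * g_smooth \<sigma> m - 2 * phi (m / \<sigma>))) (at \<sigma>)"
    proof (rule AE_I2)
      fix m :: real
      show "((\<lambda>t. p m * g_smooth t m) has_real_derivative
        p m * (\<sigma> * g_smooth \<sigma> m - 2 * phi (m / \<sigma>))) (at \<sigma>)"
        using DERIV_cmult[OF g_deriv[OF s, of m], of "p m"] stein[OF s, of m] by simp
    qed
    fix t m :: real
    have "\<bar>p m * g_smooth t m - p m * g_smooth \<sigma> m\<bar> = p m * \<bar>g_smooth t m - g_smooth \<sigma> m\<bar>"
      using p_pos[of m] by (simp add: abs_mult flip: right_diff_distrib)
    also have "\<dots> \<le> p m * (\<bar>t - \<sigma>\<bar> * C0)"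
      using p_pos[of m] g_lip_s by (intro mult_left_mono) auto
    finally show "\<bar>p m * g_smooth t m - p m * g_smooth \<sigma> m\<bar> \<le> \<bar>t - \<sigma>\<bar> * (p m * C0)"
      by (simp add: ac_simps)
  qed
  moreover have "(LINT m|lborel. p m * (\<sigma> * g_smooth \<sigma> m - 2 * phi (m / \<sigma>)))
      = \<sigma> * L_sigma p \<sigma> - 2 * (LINT m|lborel. p m * phi (m / \<sigma>))"
  proof -
    have "(LINT m|lborel. p m * (\<sigma> * g_smooth \<sigma> m - 2 * phi (m / \<sigma>)))
        = (LINT m|lborel. \<sigma> * (p m * g_smooth \<sigma> m) - 2 * (p m * phi (m / \<sigma>)))"
      by (simp add: algebra_simps)
    also have "\<dots> = \<sigma> * L_sigma p \<sigma> - 2 * (LINT m|lborel. p m * phi (m / \<sigma>))"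
      using intpg[of \<sigma>] intpp by (simp add: L_sigma_def)
    finally show ?thesis .
  qed
  moreover have "L_sigma p = (\<lambda>t. LINT m|lborel. p m * g_smooth t m)"
    by (simp add: L_sigma_def[abs_def])
  ultimately show ?thesis by simp
qed




lemma gauss_eq:
  assumes b: "b > 0"
  shows "exp (a * x - b / 2 * x\<^sup>2) =
    (sqrt (2 * pi / b) * exp (a\<^sup>2 / (2 * b))) * normal_density (a / b) (1 / sqrt b) x"
proof -
  have e1: "(1 / sqrt b)\<^sup>2 = 1 / b" using b by (simp add: power_divide)
  have nd: "normal_density (a / b) (1 / sqrt b) x = 1 / sqrt (2 * pi / b) * exp (- (x - a / b)\<^sup>2 / (2 / b))"
    unfolding normal_density_def e1 by simp
  have arg: "a\<^sup>2 / (2 * b) + (- (x - a / b)\<^sup>2 / (2 / b)) = a * x - b / 2 * x\<^sup>2"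
    using b by (simp add: field_simps power2_eq_square)
  have sp: "sqrt (2 * pi / b) > 0" using b by simp
  have "(sqrt (2 * pi / b) * exp (a\<^sup>2 / (2 * b))) * normal_density (a / b) (1 / sqrt b) x
      = (sqrt (2 * pi / b) * (1 / sqrt (2 * pi / b))) * (exp (a\<^sup>2 / (2 * b)) * exp (- (x - a / b)\<^sup>2 / (2 / b)))"
    unfolding nd by (simp add: ac_simps)
  also have "\<dots> = 1 * exp (a\<^sup>2 / (2 * b) + (- (x - a / b)\<^sup>2 / (2 / b)))"
  proof -
    have one: "sqrt (2 * pi / b) * (1 / sqrt (2 * pi / b)) = 1" using b by simp
    show ?thesis by (simp only: one exp_add)
  qed
  also have "\<dots> = exp (a * x - b / 2 * x\<^sup>2)"
    by (simp only: arg mult_1)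
  finally show ?thesis by simp
qed

lemma gauss_int:
  assumes b: "b > 0"
  shows "integrable lborel (\<lambda>x. exp (a * x - b / 2 * x\<^sup>2))"
    and "(LINT x|lborel. exp (a * x - b / 2 * x\<^sup>2)) = sqrt (2 * pi / b) * exp (a\<^sup>2 / (2 * b))"
proof -
  have f: "(\<lambda>x. exp (a * x - b / 2 * x\<^sup>2)) =
      (\<lambda>x. (sqrt (2 * pi / b) * exp (a\<^sup>2 / (2 * b))) * normal_density (a / b) (1 / sqrt b) x)"
    using gauss_eq[OF b] by (simp add: fun_eq_iff)
  show "integrable lborel (\<lambda>x. exp (a * x - b / 2 * x\<^sup>2))" unfolding f using b by simp
  show "(LINT x|lborel. exp (a * x - b / 2 * x\<^sup>2)) = sqrt (2 * pi / b) * exp (a\<^sup>2 / (2 * b))"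
    unfolding f using b by simp
qed

lemma g_lower:
  assumes s: "0 < s" "s \<le> 1"
  shows "exp (-1) * exp (- \<bar>m\<bar>) \<le> g_smooth s m"
proof -
  define E where "E = exp (- \<bar>m\<bar>) * exp (-1)"
  have pw: "phi z * (E * ((3 - z\<^sup>2) / 2)) \<le> phi z * ell_exp (m + s * z)" for z
  proof (rule mult_left_mono)
    have "\<bar>m + s * z\<bar> \<le> \<bar>m\<bar> + \<bar>s * z\<bar>" by (rule abs_triangle_ineq)
    also have "\<bar>s * z\<bar> \<le> \<bar>z\<bar>" using s by (simp add: abs_mult mult_left_le_one_le)
    finally have "\<bar>m + s * z\<bar> \<le> \<bar>m\<bar> + \<bar>z\<bar>" by simp
    then have "exp (- \<bar>m\<bar> - \<bar>z\<bar>) \<le> ell_exp (m + s * z)" by (simp add: ell_exp_def)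
    moreover have "exp (- \<bar>m\<bar> - \<bar>z\<bar>) = exp (- \<bar>m\<bar>) * (exp (-1) * exp (1 - \<bar>z\<bar>))"
      by (simp flip: exp_add exp_diff)
    moreover have "(3 - z\<^sup>2) / 2 \<le> exp (1 - \<bar>z\<bar>)"
    proof -
      have "(\<bar>z\<bar> - 1)\<^sup>2 \<ge> 0" by simp
      moreover have "(\<bar>z\<bar> - 1)\<^sup>2 = z\<^sup>2 - 2 * \<bar>z\<bar> + 1" by (simp add: power2_diff)
      ultimately have "(3 - z\<^sup>2) / 2 \<le> 2 - \<bar>z\<bar>" by (simp add: field_simps)
      also have "\<dots> \<le> exp (1 - \<bar>z\<bar>)" using exp_ge_add_one_self[of "1 - \<bar>z\<bar>"] by simp
      finally show ?thesis .
    qed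
    ultimately show "E * ((3 - z\<^sup>2) / 2) \<le> ell_exp (m + s * z)"
    proof -
      assume a1: "exp (- \<bar>m\<bar> - \<bar>z\<bar>) \<le> ell_exp (m + s * z)"
        and a2: "exp (- \<bar>m\<bar> - \<bar>z\<bar>) = exp (- \<bar>m\<bar>) * (exp (-1) * exp (1 - \<bar>z\<bar>))"
        and a3: "(3 - z\<^sup>2) / 2 \<le> exp (1 - \<bar>z\<bar>)"
      have "exp (-1) * ((3 - z\<^sup>2) / 2) \<le> exp (-1) * exp (1 - \<bar>z\<bar>)"
        using a3 by (rule mult_left_mono) simp
      then have "exp (- \<bar>m\<bar>) * (exp (-1) * ((3 - z\<^sup>2) / 2)) \<le> exp (- \<bar>m\<bar>) * (exp (-1) * exp (1 - \<bar>z\<bar>))"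
        by (rule mult_left_mono) simp
      then have "E * ((3 - z\<^sup>2) / 2) \<le> exp (- \<bar>m\<bar> - \<bar>z\<bar>)"
        unfolding E_def a2 by (simp add: ac_simps)
      then show ?thesis using a1 by linarith
    qed
  qed simp
  have m2: "(LINT z|lborel. phi z * z\<^sup>2) = 1"
    using integral_std_normal_moment_even[of 1] by simp
  have i2: "integrable lborel (\<lambda>z. phi z * z\<^sup>2)"
    using integrable_std_normal_moment[of 2] by simp
  have "(LINT z|lborel. phi z * (E * ((3 - z\<^sup>2) / 2))) =
      (LINT z|lborel. (3 * E / 2) * phi z - (E / 2) * (phi z * z\<^sup>2))"
    by (rule Bochner_Integration.integral_cong) (auto simp: field_simps)
  also have "\<dots> = E" using i2 m2 by simp
  finally have eqE: "(LINT z|lborel. phi z * (E * ((3 - z\<^sup>2) / 2))) = E" .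
  have "(LINT z|lborel. phi z * (E * ((3 - z\<^sup>2) / 2))) \<le> g_smooth s m"
    unfolding g_smooth_def
  proof (rule integral_mono)
    show "integrable lborel (\<lambda>z. phi z * (E * ((3 - z\<^sup>2) / 2)))"
    proof -
      have "integrable lborel (\<lambda>z. (3 * E / 2) * phi z - (E / 2) * (phi z * z\<^sup>2))"
        using i2 by simp
      then show ?thesis
        by (rule Bochner_Integration.integrable_cong[THEN iffD1, rotated 2]) (auto simp: field_simps)
    qed
    show "integrable lborel (\<lambda>z. phi z * ell_exp (m + s * z))" by (rule g_int)
    fix z :: real
    show "phi z * (E * ((3 - z\<^sup>2) / 2)) \<le> phi z * ell_exp (m + s * z)" by (rule pw)
  qed
  then show ?thesis using eqE by (simp add: E_def mult.commute)
qed




theorem lemma9: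
  fixes p :: "real \<Rightarrow> real" and \<nu> \<rho> \<sigma> :: real
  assumes p_pos: "\<And>x. p x > 0"
    and p_int: "integrable lborel p"
    and p_norm: "(LINT x|lborel. p x) = 1"
    and logp_diff: "\<And>x. (\<lambda>t. ln (p t)) differentiable (at x)"
    and nu_pos: "0 < \<nu>" and nu_le_rho: "\<nu> \<le> \<rho>"
    and logconc: "\<And>x y. x < y \<Longrightarrow>
        - \<rho> * (y - x) \<le> score p y - score p x \<and> score p y - score p x \<le> - \<nu> * (y - x)"
    and sigma_pos: "0 < \<sigma>"
    and sigma_le: "\<sigma> \<le> 4 * sqrt 2 / sqrt pi"
    and gamma_le: "gamma_star \<sigma> \<le> min 1 (1 / (4 * sqrt \<rho>))"
  shows "L_sigma p differentiable (at \<sigma>) \<and>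
    deriv (L_sigma p) \<sigma> \<ge>
      p 0 * (\<sigma> / 11 * (LINT \<delta>:{0..}|lborel.
                 exp ((\<bar>score p 0\<bar> - sqrt \<rho> / 4 - 1) * \<delta> - \<rho> / 2 * \<delta>\<^sup>2))
             - 2 * sqrt 2 * exp ((score p 0)\<^sup>2 / (\<nu> + 1 / \<sigma>\<^sup>2)) * (1 / sqrt (\<nu> + 1 / \<sigma>\<^sup>2)))"
proof -
  have pd: "(p has_real_derivative p x * score p x) (at x)" for x
    using p_deriv(2)[OF p_pos logp_diff] .
  have p_cont: "continuous_on UNIV p"
    by (rule continuous_at_imp_continuous_on) (use pd DERIV_isCont in blast)
  have p_meas[measurable]: "p \<in> borel_measurable borel"
    by (rule borel_measurable_continuous_onI[OF p_cont])
  have rho_pos: "\<rho> > 0" using nu_pos nu_le_rho by linarith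
  have s1: "\<sigma> \<le> 1"
  proof -
    have sp: "sqrt pi > 0" by simp
    have "\<sigma> * sqrt pi \<le> 4 * sqrt 2" using sigma_le sp by (simp add: field_simps)
    then have "1 \<le> 4 * sqrt 2 / (sqrt pi * \<sigma>)" using sp sigma_pos by (simp add: field_simps mult.commute)
    then have "0 \<le> ln (4 * sqrt 2 / (sqrt pi * \<sigma>))" by (rule ln_ge_zero)
    then have "0 \<le> \<sigma> * sqrt (2 * ln (4 * sqrt 2 / (sqrt pi * \<sigma>)))" using sigma_pos by simp
    then have "\<sigma>\<^sup>2 \<le> gamma_star \<sigma>" by (simp add: gamma_star_def)
    also have "\<dots> \<le> 1" using gamma_le by simp
    finally have "\<sigma>\<^sup>2 \<le> 1\<^sup>2" by simp
    then show ?thesis by (rule power2_le_imp_le) simp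
  qed
  note pb = p_bounds[OF p_pos logp_diff logconc]
  define S0 where "S0 = score p 0"
  define a where "a = \<nu> + 1 / \<sigma>\<^sup>2"
  have a_pos: "a > 0" unfolding a_def using nu_pos sigma_pos by (simp add: add_pos_pos)
  define Q where "Q = (LINT m|lborel. p m * phi (m / \<sigma>))"
  define T where "T = (LINT \<delta>:{0..}|lborel. exp ((\<bar>S0\<bar> - sqrt \<rho> / 4 - 1) * \<delta> - \<rho> / 2 * \<delta>\<^sup>2))"
  note LD = L_deriv[OF p_pos p_int p_meas sigma_pos, folded Q_def]
  have deriv_eq: "deriv (L_sigma p) \<sigma> = \<sigma> * L_sigma p \<sigma> - 2 * Q"
    by (rule DERIV_imp_deriv[OF LD])
  have diff: "L_sigma p differentiable (at \<sigma>)"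
    using LD real_differentiable_def by blast

  have Lbound: "p 0 * (1 / 11) * T \<le> L_sigma p \<sigma>"
  proof -
    define e where "e = (if S0 \<ge> 0 then 1 else -1 :: real)"
    have e0: "e \<noteq> 0" and eabs: "\<bar>e\<bar> = 1" and eS: "e * S0 = \<bar>S0\<bar>" and e2: "e * e = 1"
      by (auto simp: e_def)
    define F where "F m = p m * g_smooth \<sigma> m" for m
    have intF: "integrable lborel F"
      unfolding F_def[abs_def]
      by (rule Bochner_Integration.integrable_bound[where f=p])
         (use p_int p_meas p_pos in \<open>auto simp: abs_mult g_bounds intro!: mult_left_le\<close>)
    have intFe: "integrable lborel (\<lambda>x. F (e * x))"
      using lborel_integrable_real_affine[OF intF e0, of 0] by simp
    have Leq: "L_sigma p \<sigma> = (LINT x|lborel. F (e * x))"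
      using lborel_integral_real_affine[OF e0, of F 0] eabs
      by (simp add: L_sigma_def F_def[abs_def])
    define G where "G x = exp ((\<bar>S0\<bar> - 1) * x - \<rho> / 2 * x\<^sup>2)" for x
    define lo where "lo x = (p 0 * exp (-1) * G x) * indicator {0..} x" for x
    have intG: "integrable lborel G"
      unfolding G_def[abs_def] by (rule gauss_int(1)[OF rho_pos])
    have intlo: "integrable lborel lo"
      unfolding lo_def[abs_def]
      by (rule integrable_real_mult_indicator) (auto simp: intG)
    have "(LINT x|lborel. lo x) \<le> (LINT x|lborel. F (e * x))"
    proof (rule integral_mono[OF intlo intFe])
      fix x :: real
      show "lo x \<le> F (e * x)"
      proof (cases "x \<ge> 0")
        case True
        have p1: "p 0 * exp (\<bar>S0\<bar> * x - \<rho> / 2 * x\<^sup>2) \<le> p (e * x)"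
        proof -
          have h1: "S0 * (e * x) = \<bar>S0\<bar> * x"
          proof -
            have "S0 * (e * x) = (e * S0) * x" by (simp add: ac_simps)
            then show ?thesis using eS by simp
          qed
          have h2: "(e * x)\<^sup>2 = x\<^sup>2"
          proof -
            have "(e * x)\<^sup>2 = (e * e) * x\<^sup>2" by (simp add: power2_eq_square ac_simps)
            then show ?thesis using e2 by simp
          qed
          have "S0 * (e * x) - \<rho> / 2 * (e * x)\<^sup>2 = \<bar>S0\<bar> * x - \<rho> / 2 * x\<^sup>2"
            by (simp only: h1 h2)
          then show ?thesis using pb(2)[of "e * x"] by (simp add: S0_def)
        qed
        have g1: "exp (-1) * exp (- x) \<le> g_smooth \<sigma> (e * x)"
          using g_lower[OF sigma_pos s1, of "e * x"] True eabs by (simp add: abs_mult)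
        have "lo x = (p 0 * exp (\<bar>S0\<bar> * x - \<rho> / 2 * x\<^sup>2)) * (exp (-1) * exp (- x))"
          using True by (simp add: lo_def G_def algebra_simps flip: exp_add exp_diff)
        also have "\<dots> \<le> p (e * x) * g_smooth \<sigma> (e * x)"
          by (rule mult_mono[OF p1 g1]) (auto intro: less_imp_le[OF p_pos])
        finally show ?thesis by (simp add: F_def)
      next
        case False
        then have "lo x = 0" by (simp add: lo_def)
        also have "0 \<le> F (e * x)" unfolding F_def
          using p_pos[of "e * x"] g_bounds(1)[of \<sigma> "e * x"] by simp
        finally show ?thesis .
      qed
    qed
    then have L1: "(LINT x|lborel. lo x) \<le> L_sigma p \<sigma>" using Leq by simp
    have loeq: "(LINT x|lborel. lo x) = p 0 * exp (-1) * (LINT x|lborel. G x * indicator {0..} x)"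
    proof -
      have "(LINT x|lborel. lo x) = (LINT x|lborel. (p 0 * exp (-1)) * (G x * indicator {0..} x))"
        by (rule Bochner_Integration.integral_cong) (simp_all add: lo_def mult.assoc)
      also have "\<dots> = p 0 * exp (-1) * (LINT x|lborel. G x * indicator {0..} x)"
        by (rule integral_mult_right_zero)
      finally show ?thesis .
    qed
    define H where "H x = exp ((\<bar>S0\<bar> - sqrt \<rho> / 4 - 1) * x - \<rho> / 2 * x\<^sup>2)" for x
    have intH: "integrable lborel (\<lambda>x. H x * indicator {0..} x)"
      unfolding H_def[abs_def]
      by (rule integrable_real_mult_indicator) (simp, rule gauss_int(1)[OF rho_pos])
    have Teq: "T = (LINT x|lborel. H x * indicator {0..} x)"
      unfolding T_def H_def set_lebesgue_integral_def by (simp add: ac_simps)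
    have TJ: "T \<le> (LINT x|lborel. G x * indicator {0..} x)"
      unfolding Teq
    proof (rule integral_mono[OF intH])
      show "integrable lborel (\<lambda>x. G x * indicator {0..} x)"
        by (rule integrable_real_mult_indicator) (auto simp: intG)
      fix x :: real
      show "H x * indicator {0..} x \<le> G x * indicator {0..} x"
      proof (cases "x \<ge> 0")
        case True
        have "0 \<le> sqrt \<rho> / 4 * x" using True rho_pos by simp
        then have "(\<bar>S0\<bar> - sqrt \<rho> / 4 - 1) * x - \<rho> / 2 * x\<^sup>2 \<le> (\<bar>S0\<bar> - 1) * x - \<rho> / 2 * x\<^sup>2"
          by (simp add: algebra_simps)
        then show ?thesis using True by (simp add: H_def G_def)
      qed simp
    qed
    have T0: "0 \<le> T" unfolding Teq
      by (rule integral_nonneg_AE) (auto simp: H_def)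
    have e11: "1 / 11 \<le> exp (-1::real)"
    proof -
      have "exp (1::real) \<le> 11" using exp_le by simp
      then have "1 / 11 \<le> 1 / exp (1::real)" by (simp add: divide_simps)
      then show ?thesis by (simp add: exp_minus field_simps)
    qed
    have "p 0 * (1 / 11) * T \<le> p 0 * exp (-1) * T"
      using e11 T0 p_pos[of 0] by (intro mult_right_mono mult_left_mono) auto
    also have "\<dots> \<le> p 0 * exp (-1) * (LINT x|lborel. G x * indicator {0..} x)"
      using TJ p_pos[of 0] by (intro mult_left_mono) auto
    also have "\<dots> \<le> L_sigma p \<sigma>" using L1 loeq by simp
    finally show ?thesis .
  qed

  have Qbound: "Q \<le> p 0 * exp (S0\<^sup>2 / (2 * a)) / sqrt a"
  proof -
    define K where "K x = exp (S0 * x - a / 2 * x\<^sup>2)" for x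
    have intK: "integrable lborel K" unfolding K_def[abs_def] by (rule gauss_int(1)[OF a_pos])
    have intK': "integrable lborel (\<lambda>x. p 0 / sqrt (2 * pi) * K x)" using intK by simp
    have intpp: "integrable lborel (\<lambda>m. p m * phi (m / \<sigma>))"
      by (rule Bochner_Integration.integrable_bound[where f=p])
         (use p_int p_meas p_pos in \<open>auto simp: abs_mult phi_le1 intro!: mult_left_le\<close>)
    have "Q \<le> (LINT x|lborel. p 0 / sqrt (2 * pi) * K x)"
      unfolding Q_def
    proof (rule integral_mono[OF intpp intK'])
      fix m :: real
      have arg: "S0 * m - \<nu> / 2 * m\<^sup>2 + - (m / \<sigma>)\<^sup>2 / 2 = S0 * m - a / 2 * m\<^sup>2"
        using sigma_pos by (simp add: a_def field_simps power2_eq_square)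
      have "p m * phi (m / \<sigma>) \<le> p 0 * exp (S0 * m - \<nu> / 2 * m\<^sup>2) * phi (m / \<sigma>)"
        using pb(1)[of m] by (intro mult_right_mono) (auto simp: S0_def)
      also have "\<dots> = p 0 / sqrt (2 * pi) * (exp (S0 * m - \<nu> / 2 * m\<^sup>2) * exp (- (m / \<sigma>)\<^sup>2 / 2))"
        by (subst std_normal_density_def) simp
      also have "\<dots> = p 0 / sqrt (2 * pi) * K m"
        unfolding K_def arg[symmetric] exp_add ..
      finally show "p m * phi (m / \<sigma>) \<le> p 0 / sqrt (2 * pi) * K m" .
    qed
    also have "\<dots> = p 0 / sqrt (2 * pi) * (sqrt (2 * pi / a) * exp (S0\<^sup>2 / (2 * a)))"
      using gauss_int(2)[OF a_pos, of S0] by (simp add: K_def)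
    also have "\<dots> = p 0 * exp (S0\<^sup>2 / (2 * a)) / sqrt a"
      using a_pos by (simp add: real_sqrt_divide field_simps)
    finally show ?thesis .
  qed

  define Y where "Y = exp (S0\<^sup>2 / a)"
  have XY: "exp (S0\<^sup>2 / (2 * a)) \<le> sqrt 2 * Y"
  proof -
    have "S0\<^sup>2 / (2 * a) \<le> S0\<^sup>2 / a" using a_pos by (simp add: divide_simps)
    then have "exp (S0\<^sup>2 / (2 * a)) \<le> Y" by (simp add: Y_def)
    also have "Y \<le> sqrt 2 * Y" unfolding Y_def by (simp add: real_sqrt_ge_1_iff)
    finally show ?thesis .
  qed
  have Q2: "2 * Q \<le> p 0 * (2 * sqrt 2 * Y * (1 / sqrt a))"
  proof -
    have "2 * Q \<le> 2 * (p 0 * exp (S0\<^sup>2 / (2 * a)) / sqrt a)" using Qbound by simp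
    also have "\<dots> = (2 * p 0 / sqrt a) * exp (S0\<^sup>2 / (2 * a))" by simp
    also have "\<dots> \<le> (2 * p 0 / sqrt a) * (sqrt 2 * Y)"
      using XY p_pos[of 0] a_pos by (intro mult_left_mono) auto
    also have "\<dots> = p 0 * (2 * sqrt 2 * Y * (1 / sqrt a))" by simp
    finally show ?thesis .
  qed
  have sL: "\<sigma> * (p 0 * (1 / 11) * T) \<le> \<sigma> * L_sigma p \<sigma>"
    using Lbound sigma_pos by (intro mult_left_mono) auto
  have "p 0 * (\<sigma> / 11 * T - 2 * sqrt 2 * Y * (1 / sqrt a))
      = \<sigma> * (p 0 * (1 / 11) * T) - p 0 * (2 * sqrt 2 * Y * (1 / sqrt a))"
    by (simp add: algebra_simps)
  also have "\<dots> \<le> deriv (L_sigma p) \<sigma>" unfolding deriv_eq using sL Q2 by linarith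
  finally have main: "p 0 * (\<sigma> / 11 * T - 2 * sqrt 2 * Y * (1 / sqrt a)) \<le> deriv (L_sigma p) \<sigma>" .
  show ?thesis
    using diff main by (simp add: T_def Y_def a_def S0_def)
qed


end
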